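(* In $M_2(\mathbb{C})[z]$ define $$\alpha_1=\begin{pmatrix}1&0\\-1&0\end{pmatrix}+\begin{pmatrix}0&0\\1&0\end{pmatrix}z+\begin{pmatrix}1&1\\0&0\end{pmatrix}\frac{z^2}{2},\qquad \alpha_3=\begin{pmatrix}1&1\\-1&-1\end{pmatrix}z+\begin{pmatrix}-1&1\\0&0\end{pmatrix}\frac{z^2}{2},$$ $$\alpha_4=\begin{pmatrix}0&0\\1&0\end{pmatrix}\frac{z^2}{2},\qquad \alpha_5=\begin{pmatrix}0&0\\0&1\end{pmatrix}\frac{z^2}{2},$$ and set $\beta_1=\alpha_1+\alpha_3$, $\beta_3=\alpha_1-\alpha_3$, $\beta_4=2\alpha_4$, $\beta_5=2\alpha_5$. Then the set $$\{\beta_4\beta_1,\beta_3,\beta_1\}\cup\{\beta_5^n: n\ge0\}\cup\{\beta_5^n\beta_4: n\ge0\}\cup\{\beta_5^n\beta_1\beta_4: n\ge0\}\cup\{\beta_5^n\beta_1: n\ge1\}\cup\{\beta_3\beta_5^n: n\ge1\}$$ $$\cup\{\beta_1\beta_5^n: n\ge1\}\cup\{\beta_3\beta_5^n\beta_4: n\ge0\}\cup\{\beta_1\beta_5^n\beta_4: n\ge1\}$$ is linearly independent over $\mathbb{C}$. *)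

theory Defs
  imports "HOL-Analysis.Analysis" "HOL-Computational_Algebra.Polynomial"
begin

text \<open>Elements of M_2(C)[z] are represented as 2x2 matrices with entries in C[z]
  (the canonical ring isomorphism M_2(C)[z] = M_2(C[z])).\<close>

type_synonym pmat = "complex poly ^ 2 ^ 2"

definition cmat :: "complex \<Rightarrow> complex \<Rightarrow> complex \<Rightarrow> complex \<Rightarrow> complex ^ 2 ^ 2" where
  "cmat a b c d = (\<chi> i j. if i = 1 then (if j = 1 then a else b) else (if j = 1 then c else d))"

definition term_z :: "complex ^ 2 ^ 2 \<Rightarrow> nat \<Rightarrow> pmat" where
  "term_z A k = (\<chi> i j. monom (A $ i $ j) k)"

text \<open>Matrix powers w.r.t. matrix multiplication (note: ^ on vec types is entrywise).\<close>
primrec mpow :: "pmat \<Rightarrow> nat \<Rightarrow> pmat" where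
  "mpow A 0 = mat 1"
| "mpow A (Suc n) = A ** mpow A n"

definition msmult :: "complex \<Rightarrow> pmat \<Rightarrow> pmat" where
  "msmult c A = (\<chi> i j. smult c (A $ i $ j))"

definition lin_indep_C :: "pmat set \<Rightarrow> bool" where
  "lin_indep_C S \<longleftrightarrow> (\<forall>T u. finite T \<and> T \<subseteq> S \<and> (\<Sum>v\<in>T. msmult (u v) v) = 0 \<longrightarrow> (\<forall>v\<in>T. u v = 0))"

definition alpha1 :: pmat where
  "alpha1 = term_z (cmat 1 0 (-1) 0) 0 + term_z (cmat 0 0 1 0) 1 + term_z (cmat (1/2) (1/2) 0 0) 2"
definition alpha3 :: pmat where
  "alpha3 = term_z (cmat 1 1 (-1) (-1)) 1 + term_z (cmat (-1/2) (1/2) 0 0) 2"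
definition alpha4 :: pmat where
  "alpha4 = term_z (cmat 0 0 (1/2) 0) 2"
definition alpha5 :: pmat where
  "alpha5 = term_z (cmat 0 0 0 (1/2)) 2"

definition beta1 :: pmat where "beta1 = alpha1 + alpha3"
definition beta3 :: pmat where "beta3 = alpha1 - alpha3"
definition beta4 :: pmat where "beta4 = alpha4 + alpha4"
definition beta5 :: pmat where "beta5 = alpha5 + alpha5"

end

theory Submission imports Defs begin

definition mk :: "complex poly \<Rightarrow> complex poly \<Rightarrow> complex poly \<Rightarrow> complex poly \<Rightarrow> pmat" where
  "mk a b c d = (\<chi> i j. if i = 1 then (if j = 1 then a else b) else (if j = 1 then c else d))"

abbreviation X :: "nat \<Rightarrow> complex poly" where "X k \<equiv> monom 1 k"

lemma two_ne: "(1::2) \<noteq> 2" by simp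

lemma mk_nth[simp]: "mk a b c d $ 1 $ 1 = a" "mk a b c d $ 1 $ 2 = b" "mk a b c d $ 2 $ 1 = c" "mk a b c d $ 2 $ 2 = d"
  by (simp_all add: mk_def)

lemma mk_eq: "(mk a b c d = mk a' b' c' d') \<longleftrightarrow> a = a' \<and> b = b' \<and> c = c' \<and> d = d'"
  by (auto simp: mk_def vec_eq_iff forall_2)

lemma mk_mult[simp]: "mk a b c d ** mk e f g h = mk (a*e+b*g) (a*f+b*h) (c*e+d*g) (c*f+d*h)"
  by (simp add: mk_def vec_eq_iff forall_2 matrix_matrix_mult_def sum_2)

lemma term_z_mk: "term_z (cmat a b c d) k = mk (monom a k) (monom b k) (monom c k) (monom d k)"
  by (simp add: mk_def term_z_def cmat_def vec_eq_iff forall_2)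

lemma mk_add[simp]: "mk a b c d + mk e f g h = mk (a+e) (b+f) (c+g) (d+h)"
  by (simp add: mk_def vec_eq_iff forall_2)
lemma mk_diff[simp]: "mk a b c d - mk e f g h = mk (a-e) (b-f) (c-g) (d-h)"
  by (simp add: mk_def vec_eq_iff forall_2)

lemma mat1_mk: "mat 1 = mk 1 0 0 1"
  by (simp add: mk_def vec_eq_iff forall_2 mat_def)

lemma coeff_2[simp]: "coeff (2 * p) n = 2 * coeff (p::complex poly) n"
  by (metis coeff_add mult_2)

lemma beta1_mk: "beta1 = mk (X 0 + X 1) (X 1 + X 2) (- X 0) (- X 1)"
  unfolding beta1_def alpha1_def alpha3_def term_z_mk
  by (simp add: mk_eq poly_eq_iff coeff_monom)

lemma beta3_mk: "beta3 = mk (X 0 - X 1 + X 2) (- X 1) (- X 0 + monom 2 1) (X 1)"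
  unfolding beta3_def alpha1_def alpha3_def term_z_mk
  by (simp add: mk_eq poly_eq_iff coeff_monom)

lemma beta4_mk: "beta4 = mk 0 0 (X 2) 0"
  unfolding beta4_def alpha4_def term_z_mk
  by (simp add: mk_eq poly_eq_iff coeff_monom)

lemma beta5_mk: "beta5 = mk 0 0 0 (X 2)"
  unfolding beta5_def alpha5_def term_z_mk
  by (simp add: mk_eq poly_eq_iff coeff_monom)

lemma mpow_mk: "mpow beta5 n = mk (if n = 0 then X 0 else 0) 0 0 (X (2*n))"
  by (induction n) (auto simp: mat1_mk beta5_mk mult_monom mk_eq)

lemma c1: "beta4 ** beta1 = mk 0 0 (X 2 + X 3) (X 3 + X 4)"
  by (simp add: beta4_mk beta1_mk mk_eq poly_eq_iff coeff_monom algebra_simps mult_monom)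
lemma c2: "mpow beta5 n ** beta4 = mk 0 0 (X(2*n+2)) 0"
  by (simp add: mpow_mk beta4_mk mk_eq poly_eq_iff coeff_monom algebra_simps mult_monom)
lemma c3: "mpow beta5 n ** beta1 ** beta4 = mk (if n=0 then X 3 + X 4 else 0) 0 (- X(2*n+3)) 0"
  by (simp add: mpow_mk beta4_mk beta1_mk mk_eq poly_eq_iff coeff_monom algebra_simps mult_monom)
lemma c4: "n \<ge> 1 \<Longrightarrow> mpow beta5 n ** beta1 = mk 0 0 (- X(2*n)) (- X(2*n+1))"
  by (simp add: mpow_mk beta1_mk mk_eq poly_eq_iff coeff_monom algebra_simps mult_monom)
lemma c5: "n \<ge> 1 \<Longrightarrow> beta3 ** mpow beta5 n = mk 0 (- X(2*n+1)) 0 (X(2*n+1))"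
  by (simp add: mpow_mk beta3_mk mk_eq poly_eq_iff coeff_monom algebra_simps mult_monom)
lemma c6: "n \<ge> 1 \<Longrightarrow> beta1 ** mpow beta5 n = mk 0 (X(2*n+1) + X(2*n+2)) 0 (- X(2*n+1))"
  by (simp add: mpow_mk beta1_mk mk_eq poly_eq_iff coeff_monom algebra_simps mult_monom)
lemma c7: "beta3 ** mpow beta5 n ** beta4 = mk (- X(2*n+3)) 0 (X(2*n+3)) 0"
  by (simp add: mpow_mk beta3_mk beta4_mk mk_eq poly_eq_iff coeff_monom algebra_simps mult_monom)
lemma c8: "n \<ge> 1 \<Longrightarrow> beta1 ** mpow beta5 n ** beta4 = mk (X(2*n+3) + X(2*n+4)) 0 (- X(2*n+3)) 0"
  by (simp add: mpow_mk beta1_mk beta4_mk mk_eq poly_eq_iff coeff_monom algebra_simps mult_monom)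

lemma indep_crit:
  fixes g :: "'i \<Rightarrow> pmat" and \<rho> :: "'i \<Rightarrow> nat" and fa fb :: "'i \<Rightarrow> 2" and fk :: "'i \<Rightarrow> nat"
  assumes diag: "\<And>i. i \<in> I \<Longrightarrow> coeff (g i $ fa i $ fb i) (fk i) \<noteq> 0"
  and tri: "\<And>i j. i \<in> I \<Longrightarrow> j \<in> I \<Longrightarrow> coeff (g j $ fa i $ fb i) (fk i) \<noteq> 0 \<Longrightarrow> j = i \<or> \<rho> j < \<rho> i"
  shows "lin_indep_C (g ` I)"
  unfolding lin_indep_C_def
proof (intro allI impI)
  fix T u assume H: "finite T \<and> T \<subseteq> g ` I \<and> (\<Sum>v\<in>T. msmult (u v) v) = 0"
  hence fin: "finite T" and sub: "T \<subseteq> g ` I" and z: "(\<Sum>v\<in>T. msmult (u v) v) = 0" by auto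
  have key: "i \<in> I \<longrightarrow> g i \<in> T \<longrightarrow> u (g i) = 0" for i
  proof (induct i rule: measure_induct_rule[of \<rho>])
    case (less i)
    show ?case
    proof (intro impI)
      assume iI: "i \<in> I" and giT: "g i \<in> T"
      have "coeff ((\<Sum>v\<in>T. msmult (u v) v) $ fa i $ fb i) (fk i) = (\<Sum>v\<in>T. u v * coeff (v $ fa i $ fb i) (fk i))"
        by (simp add: coeff_sum msmult_def)
      hence s0: "(\<Sum>v\<in>T. u v * coeff (v $ fa i $ fb i) (fk i)) = 0" using z by simp
      have "(\<Sum>v\<in>T. u v * coeff (v $ fa i $ fb i) (fk i)) = u (g i) * coeff (g i $ fa i $ fb i) (fk i)"
      proof -
        have "(\<Sum>v\<in>T - {g i}. u v * coeff (v $ fa i $ fb i) (fk i)) = 0"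
        proof (rule sum.neutral, intro ballI)
          fix v assume v: "v \<in> T - {g i}"
          then obtain j where j: "j \<in> I" "v = g j" using sub by auto
          show "u v * coeff (v $ fa i $ fb i) (fk i) = 0"
          proof (cases "coeff (v $ fa i $ fb i) (fk i) = 0")
            case False
            with tri[OF iI j(1)] j v have "\<rho> j < \<rho> i" by auto
            with less j v show ?thesis by auto
          qed simp
        qed
        then show ?thesis by (simp add: sum.remove[OF fin giT])
      qed
      with s0 diag[OF iI] show "u (g i) = 0" by simp
    qed
  qed
  show "\<forall>v\<in>T. u v = 0" using key sub by auto
qed

datatype idx = IA | IB3 | IB1 | IP nat | IQ nat | IR nat | IS nat | IT nat | IW nat | IX nat | IY nat

fun gg :: "idx \<Rightarrow> pmat" where
  "gg IA = beta4 ** beta1"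
| "gg IB3 = beta3"
| "gg IB1 = beta1"
| "gg (IP n) = mpow beta5 n"
| "gg (IQ n) = mpow beta5 n ** beta4"
| "gg (IR n) = mpow beta5 n ** beta1 ** beta4"
| "gg (IS n) = mpow beta5 n ** beta1"
| "gg (IT n) = beta3 ** mpow beta5 n"
| "gg (IW n) = beta1 ** mpow beta5 n"
| "gg (IX n) = beta3 ** mpow beta5 n ** beta4"
| "gg (IY n) = beta1 ** mpow beta5 n ** beta4"

fun ok :: "idx \<Rightarrow> bool" where
  "ok (IS n) = (n \<ge> 1)"
| "ok (IT n) = (n \<ge> 1)"
| "ok (IW n) = (n \<ge> 1)"
| "ok (IY n) = (n \<ge> 1)"
| "ok _ = True"

fun rk :: "idx \<Rightarrow> nat" where
  "rk IA = 9" | "rk IB3 = 1" | "rk IB1 = 0"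
| "rk (IP n) = (if n = 0 then 4 else 10)"
| "rk (IQ n) = 12"
| "rk (IR n) = (if n = 0 then 5 else 13)"
| "rk (IS n) = 11" | "rk (IT n) = 3" | "rk (IW n) = 2"
| "rk (IX n) = (if n = 0 then 6 else 8)"
| "rk (IY n) = 7"

fun fa :: "idx \<Rightarrow> 2" where
  "fa IA = 2" | "fa IB3 = 1" | "fa IB1 = 1"
| "fa (IP n) = (if n = 0 then 1 else 2)"
| "fa (IQ n) = 2"
| "fa (IR n) = (if n = 0 then 1 else 2)"
| "fa (IS n) = 2" | "fa (IT n) = 1" | "fa (IW n) = 1"
| "fa (IX n) = 1" | "fa (IY n) = 1"

fun fb :: "idx \<Rightarrow> 2" where
  "fb IA = 1" | "fb IB3 = 2" | "fb IB1 = 2"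
| "fb (IP n) = (if n = 0 then 1 else 2)"
| "fb (IQ n) = 1"
| "fb (IR n) = 1"
| "fb (IS n) = 2" | "fb (IT n) = 2" | "fb (IW n) = 2"
| "fb (IX n) = 1" | "fb (IY n) = 1"

fun fk :: "idx \<Rightarrow> nat" where
  "fk IA = 3" | "fk IB3 = 1" | "fk IB1 = 2"
| "fk (IP n) = (if n = 0 then 0 else 2*n)"
| "fk (IQ n) = 2*n+2"
| "fk (IR n) = (if n = 0 then 4 else 2*n+3)"
| "fk (IS n) = 2*n+1" | "fk (IT n) = 2*n+1" | "fk (IW n) = 2*n+2"
| "fk (IX n) = 2*n+3" | "fk (IY n) = 2*n+4"

lemma gg_mk: "ok i \<Longrightarrow> gg i = (case i of
    IA \<Rightarrow> mk 0 0 (X 2 + X 3) (X 3 + X 4)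
  | IB3 \<Rightarrow> mk (X 0 - X 1 + X 2) (- X 1) (- X 0 + monom 2 1) (X 1)
  | IB1 \<Rightarrow> mk (X 0 + X 1) (X 1 + X 2) (- X 0) (- X 1)
  | IP n \<Rightarrow> mk (if n = 0 then X 0 else 0) 0 0 (X (2*n))
  | IQ n \<Rightarrow> mk 0 0 (X(2*n+2)) 0
  | IR n \<Rightarrow> mk (if n=0 then X 3 + X 4 else 0) 0 (- X(2*n+3)) 0
  | IS n \<Rightarrow> mk 0 0 (- X(2*n)) (- X(2*n+1))
  | IT n \<Rightarrow> mk 0 (- X(2*n+1)) 0 (X(2*n+1))
  | IW n \<Rightarrow> mk 0 (X(2*n+1) + X(2*n+2)) 0 (- X(2*n+1))
  | IX n \<Rightarrow> mk (- X(2*n+3)) 0 (X(2*n+3)) 0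
  | IY n \<Rightarrow> mk (X(2*n+3) + X(2*n+4)) 0 (- X(2*n+3)) 0)"
  apply (cases i)
  apply (simp_all add: c1 c2 c3 c4 c5 c6 c7 c8)
  apply (simp_all add: beta1_mk beta3_mk mpow_mk)
  apply (simp_all add: mat1_mk beta4_mk mk_eq poly_eq_iff coeff_monom algebra_simps mult_monom)
  done

lemma diag: "ok i \<Longrightarrow> coeff (gg i $ fa i $ fb i) (fk i) \<noteq> 0"
  by (subst gg_mk, assumption) (cases i; simp add: coeff_monom)

lemma tri: "ok i \<Longrightarrow> ok j \<Longrightarrow> coeff (gg j $ fa i $ fb i) (fk i) \<noteq> 0 \<Longrightarrow> j = i \<or> rk j < rk i"
  apply (subst (asm) gg_mk, assumption)
  apply (cases i; cases j; auto simp: coeff_monom split: if_splits)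
  apply presburger+
  done

theorem proposition4:
  shows "lin_indep_C
    ({beta4 ** beta1, beta3, beta1}
     \<union> {mpow beta5 n | n. n \<ge> 0}
     \<union> {mpow beta5 n ** beta4 | n. n \<ge> 0}
     \<union> {mpow beta5 n ** beta1 ** beta4 | n. n \<ge> 0}
     \<union> {mpow beta5 n ** beta1 | n. n \<ge> 1}
     \<union> {beta3 ** mpow beta5 n | n. n \<ge> 1}
     \<union> {beta1 ** mpow beta5 n | n. n \<ge> 1}
     \<union> {beta3 ** mpow beta5 n ** beta4 | n. n \<ge> 0}
     \<union> {beta1 ** mpow beta5 n ** beta4 | n. n \<ge> 1})"
proof -
  have "lin_indep_C (gg ` {i. ok i})"
    apply (rule indep_crit[where \<rho> = rk and fa = fa and fb = fb and fk = fk])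
    apply (simp add: diag)
    using tri by blast
  moreover have "gg ` {i. ok i} = ({beta4 ** beta1, beta3, beta1}
     \<union> {mpow beta5 n | n. n \<ge> 0}
     \<union> {mpow beta5 n ** beta4 | n. n \<ge> 0}
     \<union> {mpow beta5 n ** beta1 ** beta4 | n. n \<ge> 0}
     \<union> {mpow beta5 n ** beta1 | n. n \<ge> 1}
     \<union> {beta3 ** mpow beta5 n | n. n \<ge> 1}
     \<union> {beta1 ** mpow beta5 n | n. n \<ge> 1}
     \<union> {beta3 ** mpow beta5 n ** beta4 | n. n \<ge> 0}
     \<union> {beta1 ** mpow beta5 n ** beta4 | n. n \<ge> 1})" (is "_ = ?S")
  proof
    show "gg ` {i. ok i} \<subseteq> ?S"
    proof
      fix x assume "x \<in> gg ` {i. ok i}"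
      then obtain i where "ok i" "x = gg i" by auto
      then show "x \<in> ?S" by (cases i) auto
    qed
  next
    show "?S \<subseteq> gg ` {i. ok i}"
    proof
      fix x assume xS: "x \<in> ?S"
      let ?G = "gg ` {i. ok i}"
      have m0: "beta4 ** beta1 \<in> ?G" by (rule image_eqI[where x=IA]) auto
      have m1: "beta3 \<in> ?G" by (rule image_eqI[where x=IB3]) auto
      have m2: "beta1 \<in> ?G" by (rule image_eqI[where x=IB1]) auto
      have m3: "mpow beta5 n \<in> ?G" for n by (rule image_eqI[where x="IP n"]) auto
      have m4: "mpow beta5 n ** beta4 \<in> ?G" for n by (rule image_eqI[where x="IQ n"]) auto
      have m5: "mpow beta5 n ** beta1 ** beta4 \<in> ?G" for n by (rule image_eqI[where x="IR n"]) auto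
      have m6: "mpow beta5 n ** beta1 \<in> ?G" if "n \<ge> 1" for n by (rule image_eqI[where x="IS n"]) (use that in auto)
      have m7: "beta3 ** mpow beta5 n \<in> ?G" if "n \<ge> 1" for n by (rule image_eqI[where x="IT n"]) (use that in auto)
      have m8: "beta1 ** mpow beta5 n \<in> ?G" if "n \<ge> 1" for n by (rule image_eqI[where x="IW n"]) (use that in auto)
      have m9: "beta3 ** mpow beta5 n ** beta4 \<in> ?G" for n by (rule image_eqI[where x="IX n"]) auto
      have m10: "beta1 ** mpow beta5 n ** beta4 \<in> ?G" if "n \<ge> 1" for n by (rule image_eqI[where x="IY n"]) (use that in auto)
      note m = m0 m1 m2 m3 m4 m5 m6 m7 m8 m9 m10
      from xS show "x \<in> ?G" using m by blast
    qed
  qed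
  ultimately show ?thesis by simp
qed

end
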